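(* Let $V_1,V_2$ be complex vector spaces of dimensions $n_1\geq 2$, $n_2\geq 2$, with bases $(e_1,\dots,e_{n_1})$ and $(f_1,\dots,f_{n_2})$, and let $n=\min(n_1,n_2)$. Let $G=\mathrm{GL}(V_1)\times\mathrm{GL}(V_2)$ act naturally on $\overline{X}=\mathbb{P}(V_1)\times\mathbb{P}(V_2)\times\mathbb{P}((V_1\otimes V_2)^* )$ and let $\overline{\mathcal{L}}=\mathcal{O}(1)\boxtimes\mathcal{O}(1)\boxtimes\mathcal{O}(1)$ with its natural $G$-linearisation. Then the set $\overline{X}^{us}(\overline{\mathcal{L}})$ of unstable points is the closure of the $G$-orbit of $\overline{x}=(\mathbb{C}e_1,\mathbb{C}f_2,\mathbb{C}\varphi_n)$, where $\varphi_n=\sum_{i=1}^n e_i^*\otimes f_i^*\in V_1^*\otimes V_2^*\simeq(V_1\otimes V_2)^*$.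
   Context: $(e_i^* )$ and $(f_j^* )$ are the dual bases. $G$ acts on $(V_1\otimes V_2)^*$ by the contragredient of the tensor product action. For a $G$-linearised line bundle $\mathcal{N}$ on a $G$-variety $Y$, the semi-stable set is $Y^{ss}(\mathcal{N})=\{y:\exists k\geq1,\exists\sigma\in\mathrm{H}^0(Y,\mathcal{N}^{\otimes k})^G,\ \sigma(y)\neq0\}$, and the unstable set $Y^{us}(\mathcal{N})$ is its complement. *)

theory Defs
  imports "HOL-Analysis.Analysis"
begin

(* A point of V1 x V2 x (V1 (x) V2)-dual in coordinates:
   v in C^n1, w in C^n2, and the bilinear form phi given by its matrix M,
   phi(v,w) = sum_{i,j} v_i M_ij w_j. *)
type_synonym ('n1,'n2) pt = "(complex^'n1) \<times> (complex^'n2) \<times> (complex^'n2^'n1)"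

inductive poly_fun :: "(('n1::finite,'n2::finite) pt \<Rightarrow> complex) \<Rightarrow> bool" where
  pf_const: "poly_fun (\<lambda>_. c)"
| pf_var1: "poly_fun (\<lambda>(v,w,M). v $ i)"
| pf_var2: "poly_fun (\<lambda>(v,w,M). w $ j)"
| pf_var3: "poly_fun (\<lambda>(v,w,M). M $ i $ j)"
| pf_add: "poly_fun f \<Longrightarrow> poly_fun g \<Longrightarrow> poly_fun (\<lambda>p. f p + g p)"
| pf_mult: "poly_fun f \<Longrightarrow> poly_fun g \<Longrightarrow> poly_fun (\<lambda>p. f p * g p)"

definition multihom :: "(('n1::finite,'n2::finite) pt \<Rightarrow> complex) \<Rightarrow> nat \<Rightarrow> nat \<Rightarrow> nat \<Rightarrow> bool" where
  "multihom f a b c \<longleftrightarrow>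
     (\<forall>s t u v w M. f ((\<chi> i. s * v $ i), (\<chi> j. t * w $ j), (\<chi> i j. u * M $ i $ j))
                     = s ^ a * t ^ b * u ^ c * f (v, w, M))"

(* action of (g,h) in GL(V1) x GL(V2); contragredient action on bilinear forms *)
definition pact :: "complex^'n1^'n1 \<Rightarrow> complex^'n2^'n2 \<Rightarrow> ('n1::finite,'n2::finite) pt \<Rightarrow> ('n1,'n2) pt" where
  "pact g h p = (case p of (v, w, M) \<Rightarrow>
      (g *v v, h *v w, transpose (matrix_inv g) ** M ** matrix_inv h))"

(* nonzero representatives of points of P(V1) x P(V2) x P((V1 (x) V2)-dual) *)
definition valid_pt :: "('n1::finite,'n2::finite) pt \<Rightarrow> bool" where
  "valid_pt p \<longleftrightarrow> (case p of (v, w, M) \<Rightarrow> v \<noteq> 0 \<and> w \<noteq> 0 \<and> M \<noteq> 0)"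

(* G-invariant sections of L^k = O(k) boxtimes O(k) boxtimes O(k) *)
definition invariant_section :: "nat \<Rightarrow> (('n1::finite,'n2::finite) pt \<Rightarrow> complex) \<Rightarrow> bool" where
  "invariant_section k f \<longleftrightarrow> poly_fun f \<and> multihom f k k k \<and>
     (\<forall>g h q. invertible g \<and> invertible h \<longrightarrow> f (pact g h q) = f q)"

definition semistable :: "('n1::finite,'n2::finite) pt \<Rightarrow> bool" where
  "semistable p \<longleftrightarrow> (\<exists>k\<ge>1. \<exists>f. invariant_section k f \<and> f p \<noteq> 0)"

definition unstable_set :: "('n1::finite,'n2::finite) pt set" where
  "unstable_set = {p. valid_pt p \<and> \<not> semistable p}"

definition orbit :: "('n1::finite,'n2::finite) pt \<Rightarrow> ('n1,'n2) pt set" where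
  "orbit x = {pact g h x | g h. invertible g \<and> invertible h}"

(* Zariski closure in P(V1) x P(V2) x P((V1 (x) V2)-dual):
   closed sets are common zero loci of multihomogeneous polynomials *)
definition zariski_closure :: "('n1::finite,'n2::finite) pt set \<Rightarrow> ('n1,'n2) pt set" where
  "zariski_closure S = {p. valid_pt p \<and>
     (\<forall>f a b c. poly_fun f \<and> multihom f a b c \<and> (\<forall>q\<in>S. f q = 0) \<longrightarrow> f p = 0)}"

(* xbar = (C e_1, C f_2, C phi_n), bases indexed from 0 via i1, i2 *)
definition xbar :: "(nat \<Rightarrow> 'n1) \<Rightarrow> (nat \<Rightarrow> 'n2) \<Rightarrow> ('n1::finite,'n2::finite) pt" where
  "xbar i1 i2 = (axis (i1 0) 1, axis (i2 1) 1,
     (\<chi> a b. if \<exists>k < min CARD('n1) CARD('n2). a = i1 k \<and> b = i2 k then 1 else 0))"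

end

theory Submission
  imports Defs "HOL-Computational_Algebra.Polynomial"
begin


lemma minv:
  fixes A :: "'a::field^'n^'n"
  assumes "invertible A"
  shows "A ** matrix_inv A = mat 1" "matrix_inv A ** A = mat 1"
proof -
  obtain A' where "A ** A' = mat 1 \<and> A' ** A = mat 1" using assms invertible_def by blast
  then have "A ** matrix_inv A = mat 1 \<and> matrix_inv A ** A = mat 1"
    unfolding matrix_inv_def by (rule someI)
  then show "A ** matrix_inv A = mat 1" "matrix_inv A ** A = mat 1" by auto
qed

lemma minv_unique:
  fixes A B :: "'a::field^'n^'n"
  assumes "A ** B = mat 1"
  shows "matrix_inv A = B" "invertible A"
proof -
  have BA: "B ** A = mat 1" using assms matrix_left_right_inverse by blast
  then show inv: "invertible A" using assms invertible_def by blast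
  have "matrix_inv A = matrix_inv A ** (A ** B)" using assms by simp
  also have "\<dots> = (matrix_inv A ** A) ** B" by (simp add: matrix_mul_assoc)
  also have "\<dots> = B" using minv[OF inv] by simp
  finally show "matrix_inv A = B" .
qed

lemma minv_inv:
  fixes A :: "'a::field^'n^'n"
  assumes "invertible A"
  shows "invertible (matrix_inv A)" "matrix_inv (matrix_inv A) = A"
  using minv_unique[of "matrix_inv A" A] minv[OF assms] by auto

lemma minv_transpose:
  fixes A :: "'a::field^'n^'n"
  assumes "invertible A"
  shows "invertible (transpose A)" "matrix_inv (transpose A) = transpose (matrix_inv A)"
proof -
  have "transpose A ** transpose (matrix_inv A) = mat 1"
    using minv(2)[OF assms] by (metis matrix_transpose_mul transpose_mat)
  then show "invertible (transpose A)" "matrix_inv (transpose A) = transpose (matrix_inv A)"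
    using minv_unique by auto
qed

lemma minv_mult:
  fixes A B :: "'a::field^'n^'n"
  assumes "invertible A" "invertible B"
  shows "matrix_inv (A ** B) = matrix_inv B ** matrix_inv A"
proof -
  have "(A ** B) ** (matrix_inv B ** matrix_inv A) = A ** (B ** matrix_inv B) ** matrix_inv A"
    by (simp add: matrix_mul_assoc)
  also have "\<dots> = mat 1" using minv[OF assms(1)] minv[OF assms(2)] by simp
  finally show ?thesis using minv_unique by blast
qed

lemma pact_comp:
  assumes "invertible A" "invertible B" "invertible g" "invertible h"
  shows "pact A B (pact g h x) = pact (A ** g) (B ** h) x"
  using assms
  by (cases x) (simp add: pact_def minv_mult matrix_vector_mul_assoc matrix_transpose_mul matrix_mul_assoc)

definition colrep :: "'n \<Rightarrow> 'a::field^'n \<Rightarrow> 'a^'n^'n" where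
  "colrep j c = (\<chi> a b. if b = j then c$a else (if a = b then 1 else 0))"

definition colinv :: "'n \<Rightarrow> 'a::field^'n \<Rightarrow> 'a^'n" where
  "colinv j c = (\<chi> a. if a = j then 1 / c$j else - c$a / c$j)"

lemma colrep_mult:
  assumes "c$j \<noteq> 0"
  shows "colrep j c ** colrep j (colinv j c) = mat 1"
proof -
  have "(\<Sum>k\<in>UNIV. (if k = j then c $ a else if a = k then 1 else 0) *
             (if b = j then colinv j c $ k else if k = b then 1 else 0))
        = (if a = b then 1 else 0)" for a b
  proof (cases "b = j")
    case True
    have "(\<Sum>k\<in>UNIV. (if k = j then c $ a else if a = k then 1 else 0) * colinv j c $ k)
        = (\<Sum>k\<in>UNIV. (if k = j then c $ a * colinv j c $ j else 0)) +
          (\<Sum>k\<in>UNIV. (if k = a then (if a = j then 0 else colinv j c $ a) else 0))"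
      by (subst sum.distrib[symmetric]) (rule sum.cong, auto)
    also have "\<dots> = c$a / c$j + (if a = j then 0 else - c$a / c$j)"
      by (simp add: colinv_def)
    also have "\<dots> = (if a = b then 1 else 0)" using True assms by auto
    finally show ?thesis using True by simp
  next
    case False
    have "(\<Sum>k\<in>UNIV. (if k = j then c $ a else if a = k then 1 else 0) *
             (if k = b then 1 else 0)) = (\<Sum>k\<in>UNIV. if k = b then (if a = b then 1 else 0) else 0)"
      using False by (intro sum.cong) auto
    then show ?thesis using False by simp
  qed
  then show ?thesis
    by (simp add: colrep_def matrix_matrix_mult_def mat_def vec_eq_iff)
qed

lemma colrep_inv:
  assumes "c$j \<noteq> 0"
  shows "invertible (colrep j c)" "matrix_inv (colrep j c) = colrep j (colinv j c)"
  using minv_unique[OF colrep_mult[OF assms]] by auto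

lemma colrep_nth: "colrep j c $ a $ b = (if b = j then c$a else (if a = b then 1 else 0))"
  by (simp add: colrep_def)

lemma colrep_axis: "colrep j c *v axis j 1 = c"
proof -
  have "(colrep j c *v axis j 1)$i = (\<Sum>k\<in>UNIV. if k = j then c$i else 0)" for i
    unfolding matrix_vector_mult_def colrep_def vec_lambda_beta by (intro sum.cong) (auto simp: axis_def)
  then show ?thesis by (simp add: vec_eq_iff)
qed

lemma colrep_axis_other: "k \<noteq> j \<Longrightarrow> colrep j c *v axis k 1 = axis k 1"
proof -
  assume kj: "k \<noteq> j"
  have "(colrep j c *v axis k 1)$i = (\<Sum>l\<in>UNIV. if l = k then (if i = k then 1 else 0) else 0)" for i
    unfolding matrix_vector_mult_def colrep_def vec_lambda_beta using kj
    by (intro sum.cong) (auto simp: axis_def)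
  then show ?thesis by (simp add: vec_eq_iff axis_def)
qed

lemma exists_inv_col:
  fixes v :: "'a::field^'n" and i :: 'n
  assumes "v \<noteq> 0"
  shows "\<exists>A. invertible A \<and> A *v axis i 1 = v"
proof (cases "v$i = 0")
  case False
  then show ?thesis using colrep_inv colrep_axis by blast
next
  case True
  obtain j where j: "v$j \<noteq> 0" using assms by (metis vec_eq_iff zero_index)
  with True have ij: "i \<noteq> j" by auto
  let ?u = "v - axis i 1" and ?w = "axis i 1 + axis j 1 :: 'a^'n"
  have uj: "?u$j \<noteq> 0" using j ij by (simp add: axis_def)
  have wi: "?w$i \<noteq> 0" using ij by (simp add: axis_def)
  have "(colrep j ?u ** colrep i ?w) *v axis i 1 = colrep j ?u *v ?w"
    by (simp add: matrix_vector_mul_assoc[symmetric] colrep_axis)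
  also have "\<dots> = colrep j ?u *v axis i 1 + colrep j ?u *v axis j 1"
    by (simp add: matrix_vector_right_distrib)
  also have "\<dots> = v" using ij by (simp add: colrep_axis colrep_axis_other)
  finally show ?thesis
    using invertible_mult colrep_inv(1)[OF uj] colrep_inv(1)[OF wi] by blast
qed

lemma poly_fun_line:
  assumes "poly_fun f"
  shows "\<exists>P. \<forall>e. f (v, w, \<chi> i j. M$i$j + e * X$i$j) = poly P e"
  using assms
proof (induction f rule: poly_fun.induct)
  case (pf_const c)
  then show ?case by (rule exI[of _ "[:c:]"]) simp
next
  case (pf_var1 i)
  then show ?case by (rule exI[of _ "[:v$i:]"]) simp
next
  case (pf_var2 j)
  then show ?case by (rule exI[of _ "[:w$j:]"]) simp
next
  case (pf_var3 i j)
  then show ?case by (rule exI[of _ "[:M$i$j, X$i$j:]"]) simp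
next
  case (pf_add f g)
  then obtain P Q where "\<forall>e. f (v, w, \<chi> i j. M$i$j + e * X$i$j) = poly P e"
    "\<forall>e. g (v, w, \<chi> i j. M$i$j + e * X$i$j) = poly Q e" by blast
  then show ?case by (intro exI[of _ "P + Q"]) simp
next
  case (pf_mult f g)
  then obtain P Q where "\<forall>e. f (v, w, \<chi> i j. M$i$j + e * X$i$j) = poly P e"
    "\<forall>e. g (v, w, \<chi> i j. M$i$j + e * X$i$j) = poly Q e" by blast
  then show ?case by (intro exI[of _ "P * Q"]) simp
qed

lemma poly_fun_sum:
  assumes "finite S" "\<And>x. x \<in> S \<Longrightarrow> poly_fun (g x)"
  shows "poly_fun (\<lambda>p. \<Sum>x\<in>S. g x p)"
  using assms
proof (induction S rule: finite_induct)
  case empty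
  then show ?case using pf_const[of 0] by simp
next
  case (insert x F)
  then have "poly_fun (\<lambda>p. g x p + (\<Sum>x\<in>F. g x p))" by (intro pf_add) auto
  then show ?case using insert by simp
qed

lemma poly_zero_far:
  fixes P :: "complex poly"
  assumes "\<And>e. norm e > K \<Longrightarrow> poly P e = 0"
  shows "poly P 0 = 0"
proof -
  have "range (\<lambda>n::nat. complex_of_real (real n + \<bar>K\<bar> + 1)) \<subseteq> {x. poly P x = 0}"
  proof (rule image_subsetI, unfold mem_Collect_eq)
    fix n :: nat
    have "norm (complex_of_real (real n + \<bar>K\<bar> + 1)) = real n + \<bar>K\<bar> + 1"
      by (simp only: norm_of_real)
    then have "norm (complex_of_real (real n + \<bar>K\<bar> + 1)) > K" by linarith
    then show "poly P (complex_of_real (real n + \<bar>K\<bar> + 1)) = 0" using assms by blast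
  qed
  moreover have "infinite (range (\<lambda>n::nat. complex_of_real (real n + \<bar>K\<bar> + 1)))"
    by (rule range_inj_infinite) (auto simp: inj_on_def)
  ultimately have "infinite {x. poly P x = 0}" using finite_subset by blast
  then have "P = 0" using poly_roots_finite by blast
  then show ?thesis by simp
qed

lemma dd:
  fixes M :: "complex^'m::finite^'k::finite" and x :: "complex^'m"
  assumes out: "\<And>b. b \<notin> S \<Longrightarrow> x$b = 0"
    and eq: "\<And>b. b \<in> S \<Longrightarrow> (M *v x)$(\<rho> b) + e * x$b = 0"
    and big: "norm e > (\<Sum>a\<in>UNIV. \<Sum>b\<in>UNIV. norm (M$a$b))"
  shows "x = 0"
proof (rule ccontr)
  assume nz: "x \<noteq> 0"
  define m where "m = Max (range (\<lambda>b. norm (x$b)))"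
  have "m \<in> range (\<lambda>b. norm (x$b))" unfolding m_def by (intro Max_in) auto
  then obtain bs where bs: "m = norm (x$bs)" by auto
  have le: "norm (x$b) \<le> norm (x$bs)" for b
  proof -
    have "norm (x$b) \<le> m" unfolding m_def by (rule Max_ge) auto
    then show ?thesis using bs by simp
  qed
  have "x$bs \<noteq> 0"
  proof
    assume "x$bs = 0"
    then have "x$b = 0" for b using le[of b] by simp
    then show False using nz by (simp add: vec_eq_iff)
  qed
  then have bsS: "bs \<in> S" using out by blast
  have pos: "norm (x$bs) > 0" using \<open>x$bs \<noteq> 0\<close> by simp
  have "e * x$bs = - (M *v x)$(\<rho> bs)" using eq[OF bsS] by (metis add.commute eq_neg_iff_add_eq_0)
  then have "norm e * norm (x$bs) = norm ((M *v x)$(\<rho> bs))" by (metis norm_minus_cancel norm_mult)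
  also have "\<dots> = norm (\<Sum>b\<in>UNIV. M$(\<rho> bs)$b * x$b)" by (simp add: matrix_vector_mult_def)
  also have "\<dots> \<le> (\<Sum>b\<in>UNIV. norm (M$(\<rho> bs)$b) * norm (x$b))"
    by (rule order_trans[OF norm_sum]) (simp add: norm_mult)
  also have "\<dots> \<le> (\<Sum>b\<in>UNIV. norm (M$(\<rho> bs)$b) * norm (x$bs))"
    by (intro sum_mono mult_left_mono le) auto
  also have "\<dots> = (\<Sum>b\<in>UNIV. norm (M$(\<rho> bs)$b)) * norm (x$bs)"
    by (simp add: sum_distrib_right)
  also have "\<dots> \<le> (\<Sum>a\<in>UNIV. \<Sum>b\<in>UNIV. norm (M$a$b)) * norm (x$bs)"
    by (intro mult_right_mono member_le_sum) (auto intro: sum_nonneg)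
  finally have "norm e * norm (x$bs) \<le> (\<Sum>a\<in>UNIV. \<Sum>b\<in>UNIV. norm (M$a$b)) * norm (x$bs)" .
  then have "norm e \<le> (\<Sum>a\<in>UNIV. \<Sum>b\<in>UNIV. norm (M$a$b))" using pos by simp
  then show False using big by simp
qed

definition diagm :: "('n \<Rightarrow> 'a::field) \<Rightarrow> 'a^'n^'n" where
  "diagm d = (\<chi> a b. if a = b then d a else 0)"

lemma diagm_mult_left: "diagm d ** X = (\<chi> a b. d a * X$a$b)"
proof -
  have "(\<Sum>k\<in>UNIV. (if a = k then d a else 0) * X$k$b) = (\<Sum>k\<in>UNIV. if k = a then d a * X$a$b else 0)" for a b
    by (rule sum.cong) auto
  then show ?thesis by (simp add: diagm_def matrix_matrix_mult_def vec_eq_iff)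
qed

lemma diagm_mult_right: "X ** diagm d = (\<chi> a b. X$a$b * d b)"
proof -
  have "(\<Sum>k\<in>UNIV. X$a$k * (if k = b then d k else 0)) = (\<Sum>k\<in>UNIV. if k = b then X$a$b * d b else 0)" for a b
    by (rule sum.cong) auto
  then show ?thesis by (simp add: diagm_def matrix_matrix_mult_def vec_eq_iff)
qed

lemma diagm_inv:
  assumes "\<And>a. d a \<noteq> 0"
  shows "invertible (diagm d)" "matrix_inv (diagm d) = diagm (\<lambda>a. inverse (d a))"
proof -
  have "diagm d ** diagm (\<lambda>a. inverse (d a)) = mat 1"
    using assms unfolding diagm_mult_left by (simp add: diagm_def mat_def vec_eq_iff)
  then show "invertible (diagm d)" "matrix_inv (diagm d) = diagm (\<lambda>a. inverse (d a))"
    using minv_unique by auto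
qed

lemma diagm_transpose: "transpose (diagm d) = diagm d"
  by (simp add: diagm_def transpose_def vec_eq_iff)

lemma diagm_vec: "diagm d *v x = (\<chi> a. d a * x$a)"
proof -
  have "(\<Sum>k\<in>UNIV. (if a = k then d a else 0) * x$k) = (\<Sum>k\<in>UNIV. if k = a then d a * x$a else 0)" for a
    by (rule sum.cong) auto
  then show ?thesis by (simp add: diagm_def matrix_vector_mult_def vec_eq_iff)
qed


lemma mv_axis: "A *v axis j 1 = (\<chi> a. A$a$j)"
proof -
  have "(A *v axis j 1)$a = (\<Sum>k\<in>UNIV. if k = j then A$a$j else 0)" for a
    unfolding matrix_vector_mult_def vec_lambda_beta by (intro sum.cong) (auto simp: axis_def)
  then show ?thesis by (simp add: vec_eq_iff)
qed

lemma tmv_axis: "transpose A *v axis i 1 = (\<chi> b. A$i$b)"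
  by (simp add: mv_axis transpose_def)

lemma line_vec: "((\<chi> i j. M$i$j + e * X$i$j) *v x)$a = (M *v x)$a + e * (X *v x)$a"
  by (simp add: matrix_vector_mult_def algebra_simps sum.distrib sum_distrib_left)

lemma line_transpose: "transpose (\<chi> i j. M$i$j + e * X$i$j) = (\<chi> i j. (transpose M)$i$j + e * (transpose X)$i$j)"
  by (simp add: transpose_def vec_eq_iff)

lemma ker_inv:
  fixes A :: "'a::field^'n^'n"
  assumes "\<And>x. A *v x = 0 \<Longrightarrow> x = 0"
  shows "invertible A"
  using assms invertible_left_inverse matrix_left_invertible_ker by blast


lemma mv_dot: "(\<Sum>a\<in>UNIV. (g *v v)$a * (y::'a::comm_ring_1^'n)$a) = (\<Sum>a\<in>UNIV. v$a * (transpose g *v y)$a)"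
proof -
  have "(\<Sum>a\<in>UNIV. (g *v v)$a * y$a) = (\<Sum>a\<in>UNIV. \<Sum>b\<in>UNIV. g$a$b * v$b * y$a)"
    by (simp add: matrix_vector_mult_def sum_distrib_right)
  also have "\<dots> = (\<Sum>b\<in>UNIV. \<Sum>a\<in>UNIV. g$a$b * v$b * y$a)" by (rule sum.swap)
  also have "\<dots> = (\<Sum>b\<in>UNIV. v$b * (transpose g *v y)$b)"
    by (simp add: matrix_vector_mult_def transpose_def sum_distrib_left mult_ac)
  finally show ?thesis .
qed

definition phi :: "('n1::finite,'n2::finite) pt \<Rightarrow> complex" where
  "phi = (\<lambda>(v,w,M). \<Sum>a\<in>UNIV. \<Sum>b\<in>UNIV. v$a * M$a$b * w$b)"

lemma phi_alt: "phi (v,w,M) = (\<Sum>a\<in>UNIV. v$a * (M *v w)$a)"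
  by (simp add: phi_def matrix_vector_mult_def sum_distrib_left mult_ac)

lemma phi_inv: "invariant_section 1 (phi :: ('n1::finite,'n2::finite) pt \<Rightarrow> complex)"
proof -
  have "(phi :: ('n1,'n2) pt \<Rightarrow> complex) = (\<lambda>p. \<Sum>a\<in>UNIV. \<Sum>b\<in>UNIV. (\<lambda>(v,w,M). v$a) p * (\<lambda>(v,w,M). M$a$b) p * (\<lambda>(v,w,M). w$b) p)"
    by (auto simp: phi_def fun_eq_iff split: prod.splits)
  moreover have "poly_fun (\<lambda>p::('n1,'n2) pt. \<Sum>a\<in>UNIV. \<Sum>b\<in>UNIV. (\<lambda>(v,w,M). v$a) p * (\<lambda>(v,w,M). M$a$b) p * (\<lambda>(v,w,M). w$b) p)"
    by (intro poly_fun_sum pf_mult pf_var1 pf_var2 pf_var3) auto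
  ultimately have pf: "poly_fun (phi :: ('n1,'n2) pt \<Rightarrow> complex)" by (simp only:)
  have mh: "multihom (phi :: ('n1,'n2) pt \<Rightarrow> complex) 1 1 1"
    unfolding multihom_def phi_def by (simp add: sum_distrib_left mult_ac)
  have inv: "phi (pact g h q) = phi q" if "invertible g" "invertible h" for g h and q :: "('n1,'n2) pt"
  proof -
    obtain v w M where q: "q = (v,w,M)" by (cases q) auto
    have "phi (pact g h q) = (\<Sum>a\<in>UNIV. (g *v v)$a * ((transpose (matrix_inv g) ** M ** matrix_inv h) *v (h *v w))$a)"
      by (simp add: q pact_def phi_alt)
    also have "(transpose (matrix_inv g) ** M ** matrix_inv h) *v (h *v w) = transpose (matrix_inv g) *v (M *v w)"
      by (simp only: matrix_vector_mul_assoc matrix_mul_assoc[symmetric] minv(2)[OF that(2)] matrix_mul_rid)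
    also have "(\<Sum>a\<in>UNIV. (g *v v)$a * (transpose (matrix_inv g) *v (M *v w))$a)
        = (\<Sum>a\<in>UNIV. v$a * ((transpose g ** transpose (matrix_inv g)) *v (M *v w))$a)"
      by (simp add: mv_dot matrix_vector_mul_assoc matrix_mul_assoc)
    also have "transpose g ** transpose (matrix_inv g) = mat 1"
      using minv(2)[OF that(1)] by (metis matrix_transpose_mul transpose_mat)
    finally show ?thesis by (simp add: q phi_alt)
  qed
  then show ?thesis using pf mh unfolding invariant_section_def by blast
qed

lemma tmm_entry: "(transpose A ** M ** B)$i$j = (\<Sum>a\<in>UNIV. \<Sum>b\<in>UNIV. A$a$i * M$a$b * (B::'a::comm_ring_1^_^_)$b$j)"
proof -
  have "(transpose A ** M ** B)$i$j = (\<Sum>b\<in>UNIV. (\<Sum>a\<in>UNIV. A$a$i * M$a$b) * B$b$j)"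
    by (simp add: matrix_matrix_mult_def transpose_def)
  also have "\<dots> = (\<Sum>b\<in>UNIV. \<Sum>a\<in>UNIV. A$a$i * M$a$b * B$b$j)" by (simp add: sum_distrib_right)
  also have "\<dots> = (\<Sum>a\<in>UNIV. \<Sum>b\<in>UNIV. A$a$i * M$a$b * B$b$j)" by (rule sum.swap)
  finally show ?thesis .
qed

lemma lin_ml: "U ** (\<chi> i j. M$i$j + e * X$i$j) = (\<chi> i j. (U ** M)$i$j + e * (U ** X)$i$j)"
  for U :: "'a::comm_ring_1^_^_"
proof -
  have "(\<Sum>k\<in>UNIV. U$i$k * (M$k$j + e * X$k$j)) = (\<Sum>k\<in>UNIV. U$i$k * M$k$j) + e * (\<Sum>k\<in>UNIV. U$i$k * X$k$j)" for i j
    by (simp add: distrib_left sum.distrib sum_distrib_left mult.left_commute)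
  then show ?thesis by (simp add: matrix_matrix_mult_def vec_eq_iff)
qed

lemma lin_mr: "(\<chi> i j. M$i$j + e * X$i$j) ** W = (\<chi> i j. (M ** W)$i$j + e * (X ** W)$i$j)"
  for W :: "'a::comm_ring_1^_^_"
proof -
  have "(\<Sum>k\<in>UNIV. (M$i$k + e * X$i$k) * W$k$j) = (\<Sum>k\<in>UNIV. M$i$k * W$k$j) + e * (\<Sum>k\<in>UNIV. X$i$k * W$k$j)" for i j
    by (simp add: distrib_right sum.distrib sum_distrib_left mult.assoc)
  then show ?thesis by (simp add: matrix_matrix_mult_def vec_eq_iff)
qed

lemma lin_mm: "U ** (\<chi> i j. M$i$j + e * X$i$j) ** W = (\<chi> i j. (U ** M ** W)$i$j + e * (U ** X ** W)$i$j)"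
  for U :: "'a::comm_ring_1^_^_"
  by (simp only: lin_ml lin_mr)




context
  fixes i1 :: "nat \<Rightarrow> 'n1::finite" and i2 :: "nat \<Rightarrow> 'n2::finite"
  assumes c1: "CARD('n1) \<ge> 2" and c2: "CARD('n2) \<ge> 2"
    and bj1: "bij_betw i1 {..<CARD('n1)} UNIV" and bj2: "bij_betw i2 {..<CARD('n2)} UNIV"
begin

definition "k1 = inv_into {..<CARD('n1)} i1"
definition "k2 = inv_into {..<CARD('n2)} i2"
definition "nn = min CARD('n1) CARD('n2)"
definition "Jm = snd (snd (xbar i1 i2))"

lemma k1_lt: "k1 a < CARD('n1)" and i1_k1: "i1 (k1 a) = a"
  using bj1 unfolding k1_def bij_betw_def
  by (metis UNIV_I inv_into_into lessThan_iff, metis UNIV_I f_inv_into_f)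
lemma k1_i1: "k < CARD('n1) \<Longrightarrow> k1 (i1 k) = k"
  using bj1 unfolding k1_def by (simp add: bij_betw_inv_into_left)
lemma k2_lt: "k2 b < CARD('n2)" and i2_k2: "i2 (k2 b) = b"
  using bj2 unfolding k2_def bij_betw_def
  by (metis UNIV_I inv_into_into lessThan_iff, metis UNIV_I f_inv_into_f)
lemma k2_i2: "k < CARD('n2) \<Longrightarrow> k2 (i2 k) = k"
  using bj2 unfolding k2_def by (simp add: bij_betw_inv_into_left)

lemma nn_ge: "nn \<ge> 2" "nn \<le> CARD('n1)" "nn \<le> CARD('n2)"
  using c1 c2 by (auto simp: nn_def)

lemma i1_inj: "k < CARD('n1) \<Longrightarrow> l < CARD('n1) \<Longrightarrow> i1 k = i1 l \<longleftrightarrow> k = l"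
  by (metis k1_i1)
lemma i2_inj: "k < CARD('n2) \<Longrightarrow> l < CARD('n2) \<Longrightarrow> i2 k = i2 l \<longleftrightarrow> k = l"
  by (metis k2_i2)

lemma xbar_eq: "xbar i1 i2 = (axis (i1 0) 1, axis (i2 1) 1, Jm)"
  by (simp add: xbar_def Jm_def nn_def)

lemma Jval: "Jm$a$b = (if k1 a < nn \<and> b = i2 (k1 a) then 1 else 0)"
proof -
  have "(\<exists>k<nn. a = i1 k \<and> b = i2 k) \<longleftrightarrow> (k1 a < nn \<and> b = i2 (k1 a))"
    using nn_ge i1_k1 k1_i1 by (metis order_less_le_trans)
  then show ?thesis by (simp add: Jm_def xbar_def nn_def)
qed

lemma Jval2: "Jm$a$b = (if k2 b < nn \<and> a = i1 (k2 b) then 1 else 0)"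
proof -
  have "(\<exists>k<nn. a = i1 k \<and> b = i2 k) \<longleftrightarrow> (k2 b < nn \<and> a = i1 (k2 b))"
    using nn_ge i2_k2 k2_i2 by (metis order_less_le_trans)
  then show ?thesis by (simp add: Jm_def xbar_def nn_def)
qed

lemma idx_facts:
  "i1 0 \<noteq> i1 1" "i2 0 \<noteq> i2 1"
  "Jm$(i1 0)$(i2 0) = 1" "Jm$(i1 1)$(i2 1) = 1" "Jm$(i1 0)$(i2 1) = 0"
  "k1 (i1 0) = 0" "k1 (i1 1) = 1" "k2 (i2 0) = 0" "k2 (i2 1) = 1"
proof -
  have a: "k1 (i1 0) = 0" "k1 (i1 1) = 1" using k1_i1 c1 by auto
  have b: "k2 (i2 0) = 0" "k2 (i2 1) = 1" using k2_i2 c2 by auto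
  show "i1 0 \<noteq> i1 1" using a by (metis zero_neq_one)
  show "i2 0 \<noteq> i2 1" using b by (metis zero_neq_one)
  show "Jm$(i1 0)$(i2 0) = 1" "Jm$(i1 1)$(i2 1) = 1" "Jm$(i1 0)$(i2 1) = 0"
    using a nn_ge \<open>i2 0 \<noteq> i2 1\<close> by (auto simp: Jval)
  show "k1 (i1 0) = 0" "k1 (i1 1) = 1" "k2 (i2 0) = 0" "k2 (i2 1) = 1" using a b by auto
qed

lemma inv_section_xbar:
  assumes "invariant_section k f" "k \<ge> 1"
  shows "f (xbar i1 i2) = 0"
proof -
  define d1 where "d1 = (\<lambda>a. if a = i1 0 then 2 else 1 :: complex)"
  define d2 where "d2 = (\<lambda>b. if b = i2 0 then 1/2 else 1 :: complex)"
  have nz1: "\<And>a. d1 a \<noteq> 0" and nz2: "\<And>b. d2 b \<noteq> 0" by (auto simp: d1_def d2_def)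
  have i1: "invertible (diagm d1)" "matrix_inv (diagm d1) = diagm (\<lambda>a. inverse (d1 a))"
    using diagm_inv[of d1] nz1 by auto
  have i2': "invertible (diagm d2)" "matrix_inv (diagm d2) = diagm (\<lambda>a. inverse (d2 a))"
    using diagm_inv[of d2] nz2 by auto
  have eq: "pact (diagm d1) (diagm d2) (xbar i1 i2) =
         ((\<chi> i. 2 * axis (i1 0) 1 $ i), (\<chi> j. 1 * axis (i2 1) 1 $ j), (\<chi> i j. 1 * Jm $ i $ j))"
  proof -
    have "diagm d1 *v axis (i1 0) 1 = (\<chi> i. 2 * axis (i1 0) 1 $ i)"
      by (simp add: diagm_vec d1_def axis_def vec_eq_iff)
    moreover have "diagm d2 *v axis (i2 1) 1 = (\<chi> j. 1 * axis (i2 1) 1 $ j)"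
      using idx_facts by (simp add: diagm_vec d2_def axis_def vec_eq_iff)
    moreover have "transpose (matrix_inv (diagm d1)) ** Jm ** matrix_inv (diagm d2) = (\<chi> i j. 1 * Jm $ i $ j)"
    proof -
      have "inverse (d1 a) * Jm$a$b * inverse (d2 b) = Jm$a$b" for a b
      proof (cases "Jm$a$b = 0")
        case False
        then have "k1 a < nn" "b = i2 (k1 a)" by (auto simp: Jval split: if_splits)
        then have kk: "k1 a < CARD('n2)" "0 < CARD('n2)" using nn_ge c2 by auto
        have "a = i1 0 \<longleftrightarrow> k1 a = 0" using i1_k1 idx_facts(6) by metis
        moreover have "b = i2 0 \<longleftrightarrow> k1 a = 0" using i2_inj[OF kk] \<open>b = i2 (k1 a)\<close> by simp
        ultimately have "a = i1 0 \<longleftrightarrow> b = i2 0" by simp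
        then show ?thesis by (auto simp: d1_def d2_def)
      qed simp
      then show ?thesis
        by (simp add: i1(2) i2'(2) diagm_transpose diagm_mult_left diagm_mult_right vec_eq_iff)
    qed
    ultimately show ?thesis by (simp add: pact_def xbar_eq)
  qed
  have m: "f ((\<chi> i. 2 * axis (i1 0) 1 $ i), (\<chi> j. 1 * axis (i2 1) 1 $ j), (\<chi> i j. 1 * Jm $ i $ j))
     = 2^k * 1^k * 1^k * f (axis (i1 0) 1, axis (i2 1) 1, Jm)"
    using assms(1) unfolding invariant_section_def multihom_def by blast
  have "f (pact (diagm d1) (diagm d2) (xbar i1 i2)) = 2^k * f (xbar i1 i2)"
    by (subst eq) (simp only: m xbar_eq power_one mult_1_right)
  moreover have "f (pact (diagm d1) (diagm d2) (xbar i1 i2)) = f (xbar i1 i2)"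
  proof -
    have "\<forall>g h q. invertible g \<and> invertible h \<longrightarrow> f (pact g h q) = f q"
      using assms(1) unfolding invariant_section_def by (elim conjE)
    then show ?thesis using i1(1) i2'(1) by blast
  qed
  ultimately have "(2^k - 1) * f (xbar i1 i2) = 0" by (simp add: algebra_simps)
  moreover have "(2::complex)^k \<noteq> 1"
  proof
    assume "(2::complex)^k = 1"
    then have "norm ((2::complex)^k) = 1" by simp
    then have "(2::real)^k = 1" by (simp add: norm_power)
    moreover have "(1::real) < 2^k" using assms(2) by (intro one_less_power) auto
    ultimately show False by simp
  qed
  ultimately show ?thesis by simp
qed

lemma Jm_mult_left: "(Jm ** X)$a$c = (if k1 a < nn then X$(i2 (k1 a))$c else 0)"
proof -
  have "(Jm ** X)$a$c = (\<Sum>b\<in>UNIV. if b = i2 (k1 a) then (if k1 a < nn then X$(i2 (k1 a))$c else 0) else 0)"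
    unfolding matrix_matrix_mult_def vec_lambda_beta by (intro sum.cong) (auto simp: Jval)
  then show ?thesis by simp
qed

lemma Jm_mult_right: "(X ** Jm)$c$b = (if k2 b < nn then X$c$(i1 (k2 b)) else 0)"
proof -
  have "(X ** Jm)$c$b = (\<Sum>a\<in>UNIV. if a = i1 (k2 b) then (if k2 b < nn then X$c$(i1 (k2 b)) else 0) else 0)"
    unfolding matrix_matrix_mult_def vec_lambda_beta by (intro sum.cong) (auto simp: Jval2)
  then show ?thesis by simp
qed

lemma Jm_vec: "(Jm *v x)$a = (if k1 a < nn then x$(i2 (k1 a)) else 0)"
proof -
  have "(Jm *v x)$a = (\<Sum>b\<in>UNIV. if b = i2 (k1 a) then (if k1 a < nn then x$(i2 (k1 a)) else 0) else 0)"
    unfolding matrix_vector_mult_def vec_lambda_beta by (intro sum.cong) (auto simp: Jval)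
  then show ?thesis by simp
qed

lemma Jm_tvec: "(transpose Jm *v y)$b = (if k2 b < nn then y$(i1 (k2 b)) else 0)"
proof -
  have "(transpose Jm *v y)$b = (\<Sum>a\<in>UNIV. if a = i1 (k2 b) then (if k2 b < nn then y$(i1 (k2 b)) else 0) else 0)"
    unfolding matrix_vector_mult_def transpose_def vec_lambda_beta by (intro sum.cong) (auto simp: Jval2)
  then show ?thesis by simp
qed

lemma orbit_from_PQ:
  fixes P :: "complex^'n1^'n1" and Q :: "complex^'n2^'n2"
  assumes iP: "invertible P" and iQ: "invertible Q"
    and eP: "transpose P *v axis (i1 0) 1 = axis (i1 0) 1"
    and eQ: "Q *v axis (i2 1) 1 = axis (i2 1) 1"
    and PQ: "P ** Jm ** Q = N"
  shows "(axis (i1 0) 1, axis (i2 1) 1, N) \<in> orbit (xbar i1 i2)"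
proof -
  define g where "g = matrix_inv (transpose P)"
  define h where "h = matrix_inv Q"
  have tP: "invertible (transpose P)" using minv_transpose(1)[OF iP] .
  have ig: "invertible g" "matrix_inv g = transpose P" using minv_inv[OF tP] by (auto simp: g_def)
  have ih: "invertible h" "matrix_inv h = Q" using minv_inv[OF iQ] by (auto simp: h_def)
  have "g *v axis (i1 0) 1 = g *v (transpose P *v axis (i1 0) 1)" using eP by simp
  also have "\<dots> = (g ** transpose P) *v axis (i1 0) 1" by (simp only: matrix_vector_mul_assoc)
  also have "\<dots> = axis (i1 0) 1" using minv(2)[OF tP] by (simp add: g_def)
  finally have ge: "g *v axis (i1 0) 1 = axis (i1 0) 1" .
  have "h *v axis (i2 1) 1 = h *v (Q *v axis (i2 1) 1)" using eQ by simp
  also have "\<dots> = (h ** Q) *v axis (i2 1) 1" by (simp add: matrix_vector_mul_assoc)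
  also have "\<dots> = axis (i2 1) 1" using minv(2)[OF iQ] by (simp add: h_def)
  finally have he: "h *v axis (i2 1) 1 = axis (i2 1) 1" .
  have "pact g h (xbar i1 i2) = (axis (i1 0) 1, axis (i2 1) 1, N)"
    using ge he ig ih PQ by (simp add: pact_def xbar_eq)
  then show ?thesis unfolding orbit_def mem_Collect_eq using ig(1) ih(1) by metis
qed

lemma mm_col: "(A ** B)$x$j = (A *v (\<chi> a. B$a$j))$x"
  by (simp add: matrix_matrix_mult_def matrix_vector_mult_def)

lemma norm_sum_ne:
  fixes e m :: complex
  assumes "norm e > norm m"
  shows "m + e \<noteq> 0"
proof
  assume "m + e = 0"
  then have "e = - m" by (simp add: add_eq_0_iff add.commute)
  then show False using assms by simp
qed

lemma caseI:
  fixes M' :: "complex^'n2^'n1"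
  assumes n12: "CARD('n1) \<le> CARD('n2)" and z: "M'$(i1 0)$(i2 1) = 0"
    and big: "norm e > (\<Sum>a\<in>UNIV. \<Sum>b\<in>UNIV. norm (M'$a$b)) + norm (M'$(i1 1)$(i2 1))"
  shows "(axis (i1 0) 1, axis (i2 1) 1, \<chi> i j. M'$i$j + e * Jm$i$j) \<in> orbit (xbar i1 i2)"
proof -
  define N where "N = (\<chi> i j. M'$i$j + e * Jm$i$j)"
  define c where "c = (\<chi> a. N$a$(i2 1))"
  have nnI: "nn = CARD('n1)" using n12 by (simp add: nn_def)
  have sum_ge: "(\<Sum>a\<in>UNIV. \<Sum>b\<in>UNIV. norm (M'$a$b)) \<ge> 0" by (intro sum_nonneg) auto
  have c0: "c$(i1 0) = 0" using z idx_facts by (simp add: c_def N_def)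
  have c1: "c$(i1 1) \<noteq> 0"
    using idx_facts norm_sum_ne[of "M'$(i1 1)$(i2 1)" e] big sum_ge by (simp add: c_def N_def)
  define P where "P = colrep (i1 1) c"
  define Pi where "Pi = colrep (i1 1) (colinv (i1 1) c)"
  have PPi: "P ** Pi = mat 1" using colrep_mult[OF c1] by (simp add: P_def Pi_def)
  then have PiP: "Pi ** P = mat 1" using matrix_left_right_inverse by blast
  have iP: "invertible P" using colrep_inv(1)[OF c1] by (simp add: P_def)
  define Nt where "Nt = Pi ** N"
  define Q where "Q = (\<chi> b b'. if k2 b < nn then Nt$(i1 (k2 b))$b' else (if b = b' then 1 else 0::complex))"
  have JQ: "Jm ** Q = Nt"
  proof -
    have "(Jm ** Q)$a$d = Nt$a$d" for a d
    proof -
      have "k1 a < CARD('n2)" using k1_lt[of a] n12 by simp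
      then show ?thesis using k1_lt[of a] nnI
        by (simp add: Jm_mult_left Q_def k2_i2 i1_k1)
    qed
    then show ?thesis by (simp add: vec_eq_iff)
  qed
  have "P ** Jm ** Q = P ** (Pi ** N)" by (simp only: matrix_mul_assoc[symmetric] JQ Nt_def)
  also have "\<dots> = N" by (simp only: matrix_mul_assoc PPi matrix_mul_lid)
  finally have PJQ: "P ** Jm ** Q = N" .
  have eP: "transpose P *v axis (i1 0) 1 = axis (i1 0) 1"
    using c0 idx_facts(1) unfolding tmv_axis by (auto simp: P_def colrep_nth axis_def vec_eq_iff)
  have Pc: "P *v axis (i1 1) 1 = c" by (simp add: P_def colrep_axis)
  have Pic: "Pi *v c = axis (i1 1) 1"
    using PiP by (simp add: Pc[symmetric] matrix_vector_mul_assoc)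
  have Ntcol: "Nt$x$(i2 1) = axis (i1 1) 1 $ x" for x
    unfolding Nt_def mm_col by (simp only: c_def[symmetric] Pic)
  have eQ: "Q *v axis (i2 1) 1 = axis (i2 1) 1"
  proof -
    have "Q$b$(i2 1) = axis (i2 1) 1 $ b" for b
    proof (cases "k2 b < nn")
      case True
      then have "k2 b < CARD('n1)" "k2 b < CARD('n2)" using nn_ge by auto
      then have "i1 (k2 b) = i1 1 \<longleftrightarrow> b = i2 1"
        using i1_inj[of "k2 b" 1] i2_inj[of "k2 b" 1] nn_ge i2_k2[of b] by auto
      have "Q$b$(i2 1) = Nt$(i1 (k2 b))$(i2 1)" unfolding Q_def vec_lambda_beta using True by simp
      also have "\<dots> = axis (i1 1) 1 $ (i1 (k2 b))" by (rule Ntcol)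
      also have "\<dots> = axis (i2 1) 1 $ b" using \<open>i1 (k2 b) = i1 1 \<longleftrightarrow> b = i2 1\<close> by (simp add: axis_def)
      finally show ?thesis .
    next
      case False
      then have "b \<noteq> i2 1" using idx_facts nn_ge by auto
      then show ?thesis using False by (simp add: Q_def axis_def)
    qed
    then show ?thesis by (simp add: mv_axis vec_eq_iff)
  qed
  have Qx: "(Q *v x)$b = (if k2 b < nn then (Nt *v x)$(i1 (k2 b)) else x$b)" for x b
  proof (cases "k2 b < nn")
    case True
    then show ?thesis by (simp add: Q_def matrix_vector_mult_def)
  next
    case False
    have "(Q *v x)$b = (\<Sum>d\<in>UNIV. if d = b then x$b else 0)"
      unfolding matrix_vector_mult_def Q_def vec_lambda_beta using False by (intro sum.cong) auto
    then show ?thesis using False by simp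
  qed
  have iQ: "invertible Q"
  proof (rule ker_inv)
    fix x assume Q0: "Q *v x = 0"
    have out: "x$b = 0" if "b \<notin> {b. k2 b < nn}" for b
      using Qx[of x b] Q0 that by simp
    have "(Nt *v x)$a = 0" for a
    proof -
      have "k1 a < CARD('n2)" using k1_lt[of a] n12 by simp
      then have "k2 (i2 (k1 a)) = k1 a" by (rule k2_i2)
      then show ?thesis using Qx[of x "i2 (k1 a)"] Q0 k1_lt[of a] nnI i1_k1[of a] by simp
    qed
    then have Nt0: "Nt *v x = 0" by (simp add: vec_eq_iff)
    have "N *v x = P *v (Nt *v x)"
      unfolding Nt_def matrix_vector_mul_assoc by (simp only: matrix_mul_assoc PPi matrix_mul_lid)
    then have N0: "N *v x = 0" using Nt0 by simp
    show "x = 0"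
    proof (rule dd[where x=x and S="{b. k2 b < nn}" and M=M' and \<rho>="\<lambda>b. i1 (k2 b)" and e=e])
      show "\<And>b. b \<notin> {b. k2 b < nn} \<Longrightarrow> x $ b = 0" by (rule out)
      show "norm e > (\<Sum>a\<in>UNIV. \<Sum>b\<in>UNIV. norm (M'$a$b))" using big norm_ge_zero[of "M'$(i1 1)$(i2 1)"] by linarith
      fix b assume "b \<in> {b. k2 b < nn}"
      then have "k2 b < nn" by simp
      then have "k1 (i1 (k2 b)) = k2 b" using nn_ge k1_i1 by simp
      then have "(Jm *v x)$(i1 (k2 b)) = x$b" using \<open>k2 b < nn\<close> by (simp add: Jm_vec i2_k2)
      moreover have "(N *v x)$(i1 (k2 b)) = 0" using N0 by simp
      ultimately show "(M' *v x) $ i1 (k2 b) + e * x $ b = 0"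
        unfolding N_def line_vec by simp
    qed
  qed
  show ?thesis
    using orbit_from_PQ[OF iP iQ eP eQ PJQ] by (simp add: N_def)
qed

lemma mm_trow: "((N::complex^_^_) ** transpose B)$a$y = (B *v (\<chi> z. N$a$z))$y"
  by (auto simp: matrix_matrix_mult_def matrix_vector_mult_def transpose_def intro!: sum.cong)

lemma caseII:
  fixes M' :: "complex^'n2^'n1"
  assumes n21: "CARD('n2) \<le> CARD('n1)" and z: "M'$(i1 0)$(i2 1) = 0"
    and big: "norm e > (\<Sum>a\<in>UNIV. \<Sum>b\<in>UNIV. norm (M'$a$b)) + norm (M'$(i1 0)$(i2 0))"
  shows "(axis (i1 0) 1, axis (i2 1) 1, \<chi> i j. M'$i$j + e * Jm$i$j) \<in> orbit (xbar i1 i2)"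
proof -
  define N where "N = (\<chi> i j. M'$i$j + e * Jm$i$j)"
  define r where "r = (\<chi> b. N$(i1 0)$b)"
  have nnI: "nn = CARD('n2)" using n21 by (simp add: nn_def)
  have sum_ge: "(\<Sum>a\<in>UNIV. \<Sum>b\<in>UNIV. norm (M'$a$b)) \<ge> 0" by (intro sum_nonneg) auto
  have r1: "r$(i2 1) = 0" using z idx_facts by (simp add: r_def N_def)
  have r0: "r$(i2 0) \<noteq> 0"
    using idx_facts norm_sum_ne[of "M'$(i1 0)$(i2 0)" e] big sum_ge by (simp add: r_def N_def)
  define C where "C = colrep (i2 0) r"
  define Ci where "Ci = colrep (i2 0) (colinv (i2 0) r)"
  have CCi: "C ** Ci = mat 1" using colrep_mult[OF r0] by (simp add: C_def Ci_def)
  then have CiC: "Ci ** C = mat 1" using matrix_left_right_inverse by blast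
  define Q where "Q = transpose C"
  define Qi where "Qi = transpose Ci"
  have QQi: "Q ** Qi = mat 1" unfolding Q_def Qi_def
    by (metis CiC matrix_transpose_mul transpose_mat)
  have QiQ: "Qi ** Q = mat 1" unfolding Q_def Qi_def
    by (metis CCi matrix_transpose_mul transpose_mat)
  have iQ: "invertible Q" using minv_unique(2)[OF QQi] .
  define Nt where "Nt = N ** Qi"
  define P where "P = (\<chi> a a'. if k1 a' < nn then Nt$a$(i2 (k1 a')) else (if a = a' then 1 else 0::complex))"
  have PJ: "P ** Jm = Nt"
  proof -
    have "(P ** Jm)$a$b = Nt$a$b" for a b
    proof -
      have "k2 b < CARD('n1)" using k2_lt[of b] n21 by simp
      then show ?thesis using k2_lt[of b] nnI
        by (simp add: Jm_mult_right P_def k1_i1 i2_k2)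
    qed
    then show ?thesis by (simp add: vec_eq_iff)
  qed
  have "P ** Jm ** Q = N ** (Qi ** Q)" by (simp only: PJ Nt_def matrix_mul_assoc)
  then have PJQ: "P ** Jm ** Q = N" using QiQ by simp
  have eQ: "Q *v axis (i2 1) 1 = axis (i2 1) 1"
    using r1 idx_facts(2) unfolding mv_axis by (auto simp: Q_def C_def colrep_nth axis_def vec_eq_iff transpose_def)
  have Ntrow: "Nt$(i1 0)$y = axis (i2 0) 1 $ y" for y
  proof -
    have "Nt$(i1 0)$y = (Ci *v r)$y" unfolding Nt_def Qi_def mm_trow r_def by simp
    also have "Ci *v r = Ci *v (C *v axis (i2 0) 1)" by (simp add: C_def colrep_axis)
    also have "\<dots> = axis (i2 0) 1" by (simp add: matrix_vector_mul_assoc CiC)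
    finally show ?thesis .
  qed
  have eP: "transpose P *v axis (i1 0) 1 = axis (i1 0) 1"
  proof -
    have "P$(i1 0)$a' = axis (i1 0) 1 $ a'" for a'
    proof (cases "k1 a' < nn")
      case True
      then have "k1 a' < CARD('n2)" "0 < CARD('n2)" using nn_ge by auto
      then have "i2 (k1 a') = i2 0 \<longleftrightarrow> a' = i1 0"
        using i2_inj[of "k1 a'" 0] i1_k1[of a'] idx_facts(6) by metis
      have "P$(i1 0)$a' = Nt$(i1 0)$(i2 (k1 a'))" unfolding P_def vec_lambda_beta using True by simp
      also have "\<dots> = axis (i2 0) 1 $ (i2 (k1 a'))" by (rule Ntrow)
      also have "\<dots> = axis (i1 0) 1 $ a'" using \<open>i2 (k1 a') = i2 0 \<longleftrightarrow> a' = i1 0\<close> by (simp add: axis_def)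
      finally show ?thesis .
    next
      case False
      then have "a' \<noteq> i1 0" using idx_facts nn_ge by auto
      then show ?thesis using False by (simp add: P_def axis_def)
    qed
    then show ?thesis unfolding tmv_axis by (simp add: vec_eq_iff)
  qed
  have tPy: "(transpose P *v y)$a' = (if k1 a' < nn then (transpose Nt *v y)$(i2 (k1 a')) else y$a')" for y a'
  proof (cases "k1 a' < nn")
    case True
    then show ?thesis by (simp add: P_def matrix_vector_mult_def transpose_def)
  next
    case False
    have "(transpose P *v y)$a' = (\<Sum>d\<in>UNIV. if d = a' then y$a' else 0)"
      unfolding matrix_vector_mult_def transpose_def P_def vec_lambda_beta using False by (intro sum.cong) auto
    then show ?thesis using False by simp
  qed
  have itP: "invertible (transpose P)"
  proof (rule ker_inv)
    fix y assume P0: "transpose P *v y = 0"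
    have out: "y$a = 0" if "a \<notin> {a. k1 a < nn}" for a
      using tPy[of y a] P0 that by simp
    have "(transpose Nt *v y)$b = 0" for b
    proof -
      have "k2 b < CARD('n1)" using k2_lt[of b] n21 by simp
      then have "k1 (i1 (k2 b)) = k2 b" by (rule k1_i1)
      then show ?thesis using tPy[of y "i1 (k2 b)"] P0 k2_lt[of b] nnI i2_k2[of b] by simp
    qed
    then have Nt0: "transpose Nt *v y = 0" by (simp add: vec_eq_iff)
    have tNt: "transpose Nt = Ci ** transpose N" by (simp add: Nt_def Qi_def matrix_transpose_mul)
    have "C *v (transpose Nt *v y) = (C ** (Ci ** transpose N)) *v y" by (simp only: tNt matrix_vector_mul_assoc)
    also have "\<dots> = transpose N *v y" by (simp only: matrix_mul_assoc CCi matrix_mul_lid)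
    finally have "transpose N *v y = C *v (transpose Nt *v y)" by simp
    then have N0: "transpose N *v y = 0" using Nt0 by simp
    show "y = 0"
    proof (rule dd[where x=y and S="{a. k1 a < nn}" and M="transpose M'" and \<rho>="\<lambda>a. i2 (k1 a)" and e=e])
      show "\<And>a. a \<notin> {a. k1 a < nn} \<Longrightarrow> y $ a = 0" by (rule out)
      have "(\<Sum>a\<in>UNIV. \<Sum>b\<in>UNIV. norm (transpose M'$a$b)) = (\<Sum>a\<in>UNIV. \<Sum>b\<in>UNIV. norm (M'$a$b))"
        unfolding transpose_def vec_lambda_beta by (rule sum.swap)
      then show "norm e > (\<Sum>a\<in>UNIV. \<Sum>b\<in>UNIV. norm (transpose M'$a$b))"
        using big norm_ge_zero[of "M'$(i1 0)$(i2 0)"] by linarith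
      fix a assume "a \<in> {a. k1 a < nn}"
      then have "k1 a < nn" by simp
      then have "k2 (i2 (k1 a)) = k1 a" using nn_ge k2_i2 by simp
      then have "(transpose Jm *v y)$(i2 (k1 a)) = y$a" using \<open>k1 a < nn\<close> unfolding Jm_tvec by (simp add: i1_k1)
      moreover have "(transpose N *v y)$(i2 (k1 a)) = 0" using N0 by simp
      ultimately show "(transpose M' *v y) $ i2 (k1 a) + e * y $ a = 0"
        unfolding N_def line_transpose line_vec by simp
    qed
  qed
  have iP: "invertible P" using minv_transpose(1)[OF itP] by simp
  show ?thesis
    using orbit_from_PQ[OF iP iQ eP eQ PJQ] by (simp add: N_def)
qed

lemma orbit_far:
  fixes M' :: "complex^'n2^'n1"
  assumes z: "M'$(i1 0)$(i2 1) = 0"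
    and big: "norm e > (\<Sum>a\<in>UNIV. \<Sum>b\<in>UNIV. norm (M'$a$b)) + norm (M'$(i1 1)$(i2 1)) + norm (M'$(i1 0)$(i2 0))"
  shows "(axis (i1 0) 1, axis (i2 1) 1, \<chi> i j. M'$i$j + e * Jm$i$j) \<in> orbit (xbar i1 i2)"
proof (cases "CARD('n1) \<le> CARD('n2)")
  case True
  show ?thesis
    by (rule caseI[OF True z]) (use big norm_ge_zero[of "M'$(i1 0)$(i2 0)"] in linarith)
next
  case False
  show ?thesis
    by (rule caseII[OF _ z]) (use big norm_ge_zero[of "M'$(i1 1)$(i2 1)"] False in linarith)+
qed

lemma closure_part:
  fixes v :: "complex^'n1" and w :: "complex^'n2" and M :: "complex^'n2^'n1"
  assumes v: "v \<noteq> 0" and w: "w \<noteq> 0" and ph: "phi (v,w,M) = 0"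
    and pf: "poly_fun f" and van: "\<forall>q\<in>orbit (xbar i1 i2). f q = 0"
  shows "f (v,w,M) = 0"
proof -
  obtain A where iA: "invertible A" and Ae: "A *v axis (i1 0) 1 = v" using exists_inv_col[OF v] by blast
  obtain B where iB: "invertible B" and Bf: "B *v axis (i2 1) 1 = w" using exists_inv_col[OF w] by blast
  define M' where "M' = transpose A ** M ** B"
  have z: "M'$(i1 0)$(i2 1) = 0"
  proof -
    have "v = (\<chi> a. A$a$(i1 0))" "w = (\<chi> b. B$b$(i2 1))" using Ae Bf by (auto simp: mv_axis)
    then show ?thesis using ph unfolding M'_def tmm_entry by (simp add: phi_def)
  qed
  define X where "X = transpose (matrix_inv A) ** Jm ** matrix_inv B"
  have UA: "transpose (matrix_inv A) ** transpose A = mat 1"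
    using minv(1)[OF iA] by (metis matrix_transpose_mul transpose_mat)
  have "transpose (matrix_inv A) ** M' ** matrix_inv B =
     (transpose (matrix_inv A) ** transpose A) ** M ** (B ** matrix_inv B)"
    unfolding M'_def by (simp only: matrix_mul_assoc)
  then have UM: "transpose (matrix_inv A) ** M' ** matrix_inv B = M"
    by (simp add: UA minv(1)[OF iB])
  have line: "pact A B (axis (i1 0) 1, axis (i2 1) 1, \<chi> i j. M'$i$j + e * Jm$i$j) = (v, w, \<chi> i j. M$i$j + e * X$i$j)" for e
    by (simp add: pact_def Ae Bf[simplified] lin_mm UM X_def)
  obtain P where P: "\<forall>e. f (v, w, \<chi> i j. M$i$j + e * X$i$j) = poly P e"
    using poly_fun_line[OF pf] by blast
  have "poly P e = 0" if "norm e > (\<Sum>a\<in>UNIV. \<Sum>b\<in>UNIV. norm (M'$a$b)) + norm (M'$(i1 1)$(i2 1)) + norm (M'$(i1 0)$(i2 0))" for e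
  proof -
    have "(axis (i1 0) 1, axis (i2 1) 1, \<chi> i j. M'$i$j + e * Jm$i$j) \<in> orbit (xbar i1 i2)"
      by (rule orbit_far[OF z that])
    then obtain g h where ig: "invertible g" and ih: "invertible h"
      and eq: "(axis (i1 0) 1, axis (i2 1) 1, \<chi> i j. M'$i$j + e * Jm$i$j) = pact g h (xbar i1 i2)"
      unfolding orbit_def by blast
    have "(v, w, \<chi> i j. M$i$j + e * X$i$j) = pact (A ** g) (B ** h) (xbar i1 i2)"
      using line[of e] eq pact_comp[OF iA iB ig ih] by simp
    moreover have "invertible (A ** g)" "invertible (B ** h)" using invertible_mult iA iB ig ih by auto
    ultimately have "(v, w, \<chi> i j. M$i$j + e * X$i$j) \<in> orbit (xbar i1 i2)"
      unfolding orbit_def by blast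
    then have "f (v, w, \<chi> i j. M$i$j + e * X$i$j) = 0" using van by blast
    then show ?thesis using P[rule_format, of e] by simp
  qed
  then have "poly P 0 = 0" by (rule poly_zero_far)
  moreover have "(\<chi> i j. M$i$j + 0 * X$i$j) = M" by (simp add: vec_eq_iff)
  ultimately show ?thesis using P[rule_format, of 0] by simp
qed

end

theorem proposition3p3:
  fixes i1 :: "nat \<Rightarrow> 'n1::finite" and i2 :: "nat \<Rightarrow> 'n2::finite"
  assumes "CARD('n1) \<ge> 2" and "CARD('n2) \<ge> 2"
    and "bij_betw i1 {..<CARD('n1)} UNIV" and "bij_betw i2 {..<CARD('n2)} UNIV"
  shows "(unstable_set :: ('n1,'n2) pt set) = zariski_closure (orbit (xbar i1 i2))"
proof (intro set_eqI iffI)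
  fix p :: "('n1,'n2) pt"
  obtain v w M where p: "p = (v,w,M)" by (cases p) auto
  {
    assume "p \<in> unstable_set"
    then have vp: "valid_pt p" and ns: "\<not> semistable p" by (auto simp: unstable_set_def)
    have "phi p = 0" using ns phi_inv unfolding semistable_def by force
    then have ph: "phi (v,w,M) = 0" by (simp add: p)
    have "v \<noteq> 0" "w \<noteq> 0" using vp by (auto simp: p valid_pt_def)
    show "p \<in> zariski_closure (orbit (xbar i1 i2))"
      unfolding zariski_closure_def using vp closure_part[OF assms \<open>v \<noteq> 0\<close> \<open>w \<noteq> 0\<close> ph] p by auto
  next
    assume cl: "p \<in> zariski_closure (orbit (xbar i1 i2))"
    then have vp: "valid_pt p" by (simp add: zariski_closure_def)
    have "\<not> semistable p"
    proof
      assume "semistable p"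
      then obtain k f where k: "k \<ge> 1" and f: "invariant_section k f" and fp: "f p \<noteq> 0"
        unfolding semistable_def by blast
      have f0: "f (xbar i1 i2) = 0" by (rule inv_section_xbar[OF assms f k])
      have inv: "\<forall>g h q. invertible g \<and> invertible h \<longrightarrow> f (pact g h q) = f q"
        using f unfolding invariant_section_def by (elim conjE)
      have "f (pact g h (xbar i1 i2)) = 0" if "invertible g" "invertible h" for g h
        using inv[rule_format, of g h "xbar i1 i2"] that f0 by simp
      then have "\<forall>q\<in>orbit (xbar i1 i2). f q = 0"
        unfolding orbit_def by blast
      moreover have "poly_fun f" "multihom f k k k" using f unfolding invariant_section_def by auto
      ultimately have "f p = 0" using cl unfolding zariski_closure_def by blast
      then show False using fp by simp
    qed
    then show "p \<in> unstable_set" using vp by (simp add: unstable_set_def)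
  }
qed


end
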